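(* Let $\mathcal L=\langle +,<,0,P\rangle$ with $P$ a unary predicate, and for each $n\in\mathbb N$ let $\mathbb Q_n$ be the $\mathcal L$-structure $(\mathbb Q,+,<,0,\{0,1,\dots,n\})$ (interpreting $P$ as $\{0,\dots,n\}$). Let $\mathcal F$ be a non-principal ultrafilter on $\mathbb N$ and $\mathcal G=\prod_n\mathbb Q_n/\mathcal F$. Then $\mathcal G$ satisfies the scheme DCI but is not o-minimal.
   Context: For an $\mathcal L$-formula $\varphi(v,\bar w)$, $\mathrm{DCI}_\varphi$ is the sentence $\forall\bar w\Big(\big(\exists s\,\forall v<s\,\varphi(v,\bar w)\ \wedge\ \forall v\big(\forall s<v\,\varphi(s,\bar w)\to\exists u>v\,\forall s<u\,\varphi(s,\bar w)\big)\big)\to\forall v\,\varphi(v,\bar w)\Big)$, and DCI is the scheme $\{\mathrm{DCI}_\varphi:\varphi(v,\bar w)\text{ an }\mathcal L\text{-formula}\}$. A linearly ordered structure is o-minimal if every subset definable (with parameters) is a finite union of open intervals and points. *)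

theory Defs
  imports Complex_Main "HOL-Library.FuncSet"
begin

datatype tm = Var nat | Zero | Plus tm tm

datatype fm =
    Eq tm tm
  | Less tm tm
  | Pr tm
  | Neg fm
  | Conj fm fm
  | Disj fm fm
  | Ex nat fm
  | All nat fm

record 'a lstruct =
  carrier :: "'a set"
  add :: "'a \<Rightarrow> 'a \<Rightarrow> 'a"
  lt :: "'a \<Rightarrow> 'a \<Rightarrow> bool"
  zer :: 'a
  pred :: "'a set"

fun eval_tm :: "'a lstruct \<Rightarrow> (nat \<Rightarrow> 'a) \<Rightarrow> tm \<Rightarrow> 'a" where
  "eval_tm M e (Var i) = e i"
| "eval_tm M e Zero = zer M"
| "eval_tm M e (Plus s t) = add M (eval_tm M e s) (eval_tm M e t)"

fun sat :: "'a lstruct \<Rightarrow> (nat \<Rightarrow> 'a) \<Rightarrow> fm \<Rightarrow> bool" where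
  "sat M e (Eq s t) = (eval_tm M e s = eval_tm M e t)"
| "sat M e (Less s t) = lt M (eval_tm M e s) (eval_tm M e t)"
| "sat M e (Pr t) = (eval_tm M e t \<in> pred M)"
| "sat M e (Neg \<phi>) = (\<not> sat M e \<phi>)"
| "sat M e (Conj \<phi> \<psi>) = (sat M e \<phi> \<and> sat M e \<psi>)"
| "sat M e (Disj \<phi> \<psi>) = (sat M e \<phi> \<or> sat M e \<psi>)"
| "sat M e (Ex i \<phi>) = (\<exists>x\<in>carrier M. sat M (e(i := x)) \<phi>)"
| "sat M e (All i \<phi>) = (\<forall>x\<in>carrier M. sat M (e(i := x)) \<phi>)"

text \<open>phi(v, w) with distinguished variable v; the parameters w are the values
  the environment e assigns to the other variables.\<close>
definition satisfies_DCI :: "'a lstruct \<Rightarrow> bool" where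
  "satisfies_DCI M \<longleftrightarrow>
     (\<forall>\<phi> v e. (\<forall>i. e i \<in> carrier M) \<longrightarrow>
        (let \<Phi> = (\<lambda>x. sat M (e(v := x)) \<phi>) in
          ((\<exists>s\<in>carrier M. \<forall>x\<in>carrier M. lt M x s \<longrightarrow> \<Phi> x)
           \<and> (\<forall>x\<in>carrier M. (\<forall>s\<in>carrier M. lt M s x \<longrightarrow> \<Phi> s) \<longrightarrow>
                 (\<exists>u\<in>carrier M. lt M x u \<and> (\<forall>s\<in>carrier M. lt M s u \<longrightarrow> \<Phi> s))))
          \<longrightarrow> (\<forall>x\<in>carrier M. \<Phi> x)))"

definition definable_set :: "'a lstruct \<Rightarrow> 'a set \<Rightarrow> bool" where
  "definable_set M X \<longleftrightarrow>
     (\<exists>\<phi> v e. (\<forall>i. e i \<in> carrier M) \<and> X = {x \<in> carrier M. sat M (e(v := x)) \<phi>})"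

definition open_interval :: "'a lstruct \<Rightarrow> 'a set \<Rightarrow> bool" where
  "open_interval M I \<longleftrightarrow>
     (\<exists>a\<in>carrier M. \<exists>b\<in>carrier M. I = {x \<in> carrier M. lt M a x \<and> lt M x b})
   \<or> (\<exists>a\<in>carrier M. I = {x \<in> carrier M. lt M a x})
   \<or> (\<exists>b\<in>carrier M. I = {x \<in> carrier M. lt M x b})
   \<or> I = carrier M"

definition o_minimal :: "'a lstruct \<Rightarrow> bool" where
  "o_minimal M \<longleftrightarrow>
     (\<forall>X. definable_set M X \<longrightarrow>
        (\<exists>S. finite S \<and> (\<forall>I\<in>S. open_interval M I \<or> (\<exists>a\<in>carrier M. I = {a})) \<and> X = \<Union>S))"

definition nonprincipal_ultrafilter :: "nat set set \<Rightarrow> bool" where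
  "nonprincipal_ultrafilter U \<longleftrightarrow>
     UNIV \<in> U \<and> {} \<notin> U
   \<and> (\<forall>A\<in>U. \<forall>B\<in>U. A \<inter> B \<in> U)
   \<and> (\<forall>A B. A \<in> U \<and> A \<subseteq> B \<longrightarrow> B \<in> U)
   \<and> (\<forall>A. A \<in> U \<or> - A \<in> U)
   \<and> (\<forall>A\<in>U. infinite A)"

definition uprel :: "nat set set \<Rightarrow> (nat \<Rightarrow> 'a lstruct) \<Rightarrow> ((nat \<Rightarrow> 'a) \<times> (nat \<Rightarrow> 'a)) set" where
  "uprel U M = {(f, g). f \<in> Pi UNIV (\<lambda>n. carrier (M n)) \<and> g \<in> Pi UNIV (\<lambda>n. carrier (M n))
                  \<and> {n. f n = g n} \<in> U}"

definition ultraproduct :: "nat set set \<Rightarrow> (nat \<Rightarrow> 'a lstruct) \<Rightarrow> (nat \<Rightarrow> 'a) set lstruct" where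
  "ultraproduct U M =
    \<lparr> carrier = Pi UNIV (\<lambda>n. carrier (M n)) // uprel U M,
      add = (\<lambda>X Y. {h. \<exists>f\<in>X. \<exists>g\<in>Y. (h, \<lambda>n. add (M n) (f n) (g n)) \<in> uprel U M}),
      lt = (\<lambda>X Y. \<exists>f\<in>X. \<exists>g\<in>Y. {n. lt (M n) (f n) (g n)} \<in> U),
      zer = uprel U M `` {\<lambda>n. zer (M n)},
      pred = {X \<in> Pi UNIV (\<lambda>n. carrier (M n)) // uprel U M. \<exists>f\<in>X. {n. f n \<in> pred (M n)} \<in> U} \<rparr>"

definition Qn :: "nat \<Rightarrow> rat lstruct" where
  "Qn n = \<lparr> carrier = UNIV, add = (+), lt = (<), zer = 0, pred = of_nat ` {0..n} \<rparr>"

end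

theory Submission
  imports Defs
begin


inductive affine :: "((nat \<Rightarrow> rat) \<Rightarrow> rat) \<Rightarrow> bool" where
  aconst: "affine (\<lambda>e. c)"
| avar: "affine (\<lambda>e. e i)"
| aadd: "affine \<alpha> \<Longrightarrow> affine \<beta> \<Longrightarrow> affine (\<lambda>e. \<alpha> e + \<beta> e)"
| ascale: "affine \<alpha> \<Longrightarrow> affine (\<lambda>e. c * \<alpha> e)"

lemma affine_cong: "affine \<alpha> \<Longrightarrow> (\<And>e. \<beta> e = \<alpha> e) \<Longrightarrow> affine \<beta>"
proof -
  assume "affine \<alpha>" "\<And>e. \<beta> e = \<alpha> e"
  then have "\<beta> = \<alpha>" by (simp add: fun_eq_iff)
  then show ?thesis using \<open>affine \<alpha>\<close> by simp
qed

lemma affine_diff: "affine \<alpha> \<Longrightarrow> affine \<beta> \<Longrightarrow> affine (\<lambda>e. \<alpha> e - \<beta> e)"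
  by (rule affine_cong[OF aadd[OF _ ascale[where c="-1"]]]) auto

lemma affine_split: "affine \<alpha> \<Longrightarrow> \<exists>a. \<forall>e x. \<alpha> (e(i:=x)) = \<alpha> (e(i:=0)) + a * x"
proof (induction rule: affine.induct)
  case (aconst c) then show ?case by auto
next
  case (avar j) then show ?case by (cases "j = i") auto
next
  case (aadd \<alpha> \<beta>)
  then obtain a b where 1: "\<And>e x. \<alpha> (e(i:=x)) = \<alpha> (e(i:=0)) + a * x"
     and 2: "\<And>e x. \<beta> (e(i:=x)) = \<beta> (e(i:=0)) + b * x" by blast
  show ?case
  proof (intro exI[of _ "a+b"] allI)
    fix e x
    show "\<alpha> (e(i:=x)) + \<beta> (e(i:=x)) = \<alpha> (e(i:=0)) + \<beta> (e(i:=0)) + (a + b) * x"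
      unfolding distrib_right using 1[of e x] 2[of e x] by linarith
  qed
next
  case (ascale \<alpha> c)
  then obtain a where 1: "\<And>e x. \<alpha> (e(i:=x)) = \<alpha> (e(i:=0)) + a * x" by blast
  show ?case
  proof (intro exI[of _ "c*a"] allI)
    fix e x
    show "c * \<alpha> (e(i:=x)) = c * \<alpha> (e(i:=0)) + (c * a) * x"
      using 1[of e x] by (simp add: algebra_simps)
  qed
qed

lemma affine_subst: "affine \<alpha> \<Longrightarrow> affine \<tau> \<Longrightarrow> affine (\<lambda>e. \<alpha> (e(i := \<tau> e)))"
proof (induction rule: affine.induct)
  case (aconst c) then show ?case by (simp add: affine.aconst)
next
  case (avar j) then show ?case by (cases "j = i") (auto intro: affine.avar)
next
  case (aadd \<alpha> \<beta>) then show ?case by (auto intro: affine.aadd)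
next
  case (ascale \<alpha> c) then show ?case by (auto intro: affine.ascale)
qed

definition resp :: "((nat \<Rightarrow> rat) \<Rightarrow> rat) list \<Rightarrow> ((nat \<Rightarrow> rat) \<Rightarrow> bool) \<Rightarrow> bool" where
  "resp L P \<longleftrightarrow> (\<forall>e e'. (\<forall>\<alpha>\<in>set L. sgn (\<alpha> e) = sgn (\<alpha> e')) \<longrightarrow> (P e \<longleftrightarrow> P e'))"

lemma respI:
  assumes "\<And>e e'. (\<forall>\<alpha>\<in>set L. sgn (\<alpha> e) = sgn (\<alpha> e')) \<Longrightarrow> P e \<Longrightarrow> P e'"
  shows "resp L P"
  unfolding resp_def using assms by metis

lemma same_side:
  fixes a b :: "'b \<Rightarrow> rat"
  assumes "\<forall>r\<in>{- b \<alpha> / a \<alpha> |\<alpha>. \<alpha> \<in> set L \<and> a \<alpha> \<noteq> 0}. sgn (x - r) = sgn (y - r)"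
    and "\<alpha> \<in> set L"
  shows "sgn (a \<alpha> * x + b \<alpha>) = sgn (a \<alpha> * y + b \<alpha>)"
proof (cases "a \<alpha> = 0")
  case True then show ?thesis by simp
next
  case False
  let ?r = "- b \<alpha> / a \<alpha>"
  have "sgn (x - ?r) = sgn (y - ?r)" using assms False by blast
  moreover have "a \<alpha> * x + b \<alpha> = a \<alpha> * (x - ?r)" "a \<alpha> * y + b \<alpha> = a \<alpha> * (y - ?r)"
    using False by (simp_all add: field_simps)
  ultimately show ?thesis by (simp add: sgn_mult)
qed




lemma same_side':
  fixes a b :: "'b \<Rightarrow> rat"
  assumes hQ: "\<forall>x y. (\<forall>\<alpha>\<in>set L. sgn (a \<alpha> * x + b \<alpha>) = sgn (a \<alpha> * y + b \<alpha>)) \<longrightarrow> Q x \<longrightarrow> Q y"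
    and "\<forall>r\<in>{- b \<alpha> / a \<alpha> |\<alpha>. \<alpha> \<in> set L \<and> a \<alpha> \<noteq> 0}. sgn (x - r) = sgn (y - r)"
    and "Q x"
  shows "Q y"
  using hQ assms(2,3) same_side[OF assms(2)] by blast

lemma FR:
  fixes a b :: "'b \<Rightarrow> rat"
  assumes hQ: "\<forall>x y. (\<forall>\<alpha>\<in>set L. sgn (a \<alpha> * x + b \<alpha>) = sgn (a \<alpha> * y + b \<alpha>)) \<longrightarrow> Q x \<longrightarrow> Q y"
    and Qx: "Q x"
  shows "Q 0 \<or> (\<exists>\<alpha>\<in>set L. Q (- b \<alpha> / a \<alpha>) \<or> Q (- b \<alpha> / a \<alpha> + 1) \<or> Q (- b \<alpha> / a \<alpha> - 1)
             \<or> (\<exists>\<beta>\<in>set L. Q ((- b \<alpha> / a \<alpha> + - b \<beta> / a \<beta>) / 2)))"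
proof -
  define R where "R = {- b \<alpha> / a \<alpha> |\<alpha>. \<alpha> \<in> set L \<and> a \<alpha> \<noteq> 0}"
  have finR: "finite R" unfolding R_def by simp
  have SS: "Q y" if "\<forall>r\<in>R. sgn (x - r) = sgn (y - r)" for y
    using same_side'[OF hQ _ Qx] that unfolding R_def by blast
  have inR: "\<exists>\<alpha>\<in>set L. r = - b \<alpha> / a \<alpha>" if "r \<in> R" for r
    using that unfolding R_def by blast
  show ?thesis
  proof (cases "R = {}")
    case True then show ?thesis using SS by auto
  next
    case Rne: False
    show ?thesis
    proof (cases "x \<in> R")
      case True then show ?thesis using inR Qx by blast
    next
      case xR: False
      show ?thesis
      proof (cases "\<forall>r\<in>R. x < r")
        case True
        define t where "t = Min R - 1"
        have "\<forall>r\<in>R. t < r"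
        proof
          fix r assume "r \<in> R" then have "Min R \<le> r" using finR by simp
          then show "t < r" unfolding t_def by simp
        qed
        then have "Q t" using True by (intro SS) (auto simp: sgn_if)
        moreover obtain \<alpha> where "\<alpha>\<in>set L" "Min R = - b \<alpha> / a \<alpha>" using inR[OF Min_in[OF finR Rne]] by blast
        ultimately show ?thesis unfolding t_def by auto
      next
        case nlow: False
        show ?thesis
        proof (cases "\<forall>r\<in>R. r < x")
          case True
          define t where "t = Max R + 1"
          have "\<forall>r\<in>R. r < t"
          proof
            fix r assume "r \<in> R" then have "r \<le> Max R" using finR by simp
            then show "r < t" unfolding t_def by simp
          qed
          then have "Q t" using True by (intro SS) (auto simp: sgn_if)
          moreover obtain \<alpha> where "\<alpha>\<in>set L" "Max R = - b \<alpha> / a \<alpha>" using inR[OF Max_in[OF finR Rne]] by blast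
          ultimately show ?thesis unfolding t_def by auto
        next
          case nhigh: False
          define Rl where "Rl = {r\<in>R. r < x}"
          define Ru where "Ru = {r\<in>R. x < r}"
          have fl: "finite Rl" "finite Ru" using finR unfolding Rl_def Ru_def by auto
          have nel: "Rl \<noteq> {}" using nlow xR unfolding Rl_def by (auto simp: not_less order.order_iff_strict)
          have neu: "Ru \<noteq> {}" using nhigh xR unfolding Ru_def by (auto simp: not_less order.order_iff_strict)
          define l where "l = Max Rl"
          define u where "u = Min Ru"
          have lRl: "l \<in> Rl" unfolding l_def using fl nel by simp
          have uRu: "u \<in> Ru" unfolding u_def using fl neu by simp
          have lx: "l < x" "x < u" using lRl uRu unfolding Rl_def Ru_def by auto
          define t where "t = (l + u) / 2"
          have tt: "l < t" "t < u" using lx unfolding t_def by auto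
          have "\<forall>r\<in>R. sgn (x - r) = sgn (t - r)"
          proof
            fix r assume r: "r \<in> R"
            have "r \<noteq> x" using r xR by auto
            then consider "r < x" | "x < r" by linarith
            then show "sgn (x - r) = sgn (t - r)"
            proof cases
              case 1
              then have "r \<in> Rl" using r unfolding Rl_def by auto
              then have "r \<le> l" unfolding l_def using fl by simp
              then show ?thesis using 1 tt by (auto simp: sgn_if)
            next
              case 2
              then have "r \<in> Ru" using r unfolding Ru_def by auto
              then have "u \<le> r" unfolding u_def using fl by simp
              then show ?thesis using 2 tt by (auto simp: sgn_if)
            qed
          qed
          then have "Q t" by (rule SS)
          moreover obtain \<alpha> where "\<alpha>\<in>set L" "l = - b \<alpha> / a \<alpha>" using inR lRl unfolding Rl_def by blast
          moreover obtain \<beta> where "\<beta>\<in>set L" "u = - b \<beta> / a \<beta>" using inR uRu unfolding Ru_def by blast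
          ultimately show ?thesis unfolding t_def by auto
        qed
      qed
    qed
  qed
qed




lemma resp_neg: "resp L P \<Longrightarrow> resp L (\<lambda>e. \<not> P e)"
  unfolding resp_def by blast

lemma affine_div: "affine \<alpha> \<Longrightarrow> affine (\<lambda>e. \<alpha> e / c)"
  by (rule affine_cong[OF ascale[where c="1/c"]]) auto

lemma ex_step:
  assumes aff: "\<forall>\<alpha>\<in>set L. affine \<alpha>" and r: "resp L P"
  shows "\<exists>L'. (\<forall>\<alpha>\<in>set L'. affine \<alpha>) \<and> resp L' (\<lambda>e. \<exists>x. P (e(i:=x)))"
proof -
  define co where "co \<alpha> = (SOME a. \<forall>e x. \<alpha> (e(i:=x)) = \<alpha> (e(i:=0)) + a * x)" for \<alpha> :: "(nat \<Rightarrow> rat) \<Rightarrow> rat"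
  have co: "\<alpha> (e(i:=x)) = \<alpha> (e(i:=0)) + co \<alpha> * x" if "\<alpha> \<in> set L" for \<alpha> e x
  proof -
    have "\<exists>a. \<forall>e x. \<alpha> (e(i:=x)) = \<alpha> (e(i:=0)) + a * x" using affine_split aff that by blast
    then have "\<forall>e x. \<alpha> (e(i:=x)) = \<alpha> (e(i:=0)) + co \<alpha> * x" unfolding co_def by (rule someI_ex)
    then show ?thesis by blast
  qed
  define rt where "rt \<alpha> e = - \<alpha> (e(i:=0)) / co \<alpha>" for \<alpha> e
  define tests where "tests = (\<lambda>e. 0) # concat (map (\<lambda>\<alpha>. [rt \<alpha>, \<lambda>e. rt \<alpha> e + 1, \<lambda>e. rt \<alpha> e - 1] @ map (\<lambda>\<beta> e. (rt \<alpha> e + rt \<beta> e)/2) L) L)"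
  define L' where "L' = concat (map (\<lambda>\<tau>. map (\<lambda>\<alpha> e. \<alpha> (e(i:=\<tau> e))) L) tests)"
  have aff_rt: "affine (rt \<alpha>)" if "\<alpha> \<in> set L" for \<alpha>
  proof (rule affine_cong[OF ascale[OF affine_subst[OF _ aconst]]])
    show "affine \<alpha>" using aff that by blast
    fix e show "rt \<alpha> e = (-1 / co \<alpha>) * \<alpha> (e(i := 0))" unfolding rt_def by simp
  qed
  have aff_tests: "affine \<tau>" if "\<tau> \<in> set tests" for \<tau>
    using that unfolding tests_def
    by (auto intro!: affine.intros aff_rt affine_diff affine_div)
  have "\<forall>\<alpha>\<in>set L'. affine \<alpha>"
    unfolding L'_def using aff aff_tests by (auto intro: affine_subst)
  moreover have "resp L' (\<lambda>e. \<exists>x. P (e(i:=x)))"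
  proof (rule respI)
    fix e e'
    assume H: "\<forall>\<beta>\<in>set L'. sgn (\<beta> e) = sgn (\<beta> e')" and "\<exists>x. P (e(i:=x))"
    then obtain x where Px: "P (e(i:=x))" by blast
    have hQ: "\<forall>x y. (\<forall>\<alpha>\<in>set L. sgn (co \<alpha> * x + \<alpha> (e(i:=0))) = sgn (co \<alpha> * y + \<alpha> (e(i:=0)))) \<longrightarrow> P (e(i:=x)) \<longrightarrow> P (e(i:=y))"
    proof (intro allI impI)
      fix x y
      assume s: "\<forall>\<alpha>\<in>set L. sgn (co \<alpha> * x + \<alpha> (e(i:=0))) = sgn (co \<alpha> * y + \<alpha> (e(i:=0)))" and "P (e(i:=x))"
      have "\<forall>\<alpha>\<in>set L. sgn (\<alpha> (e(i:=x))) = sgn (\<alpha> (e(i:=y)))"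
        using s co by (simp add: add.commute)
      then show "P (e(i:=y))" using r \<open>P (e(i:=x))\<close> unfolding resp_def by blast
    qed
    have disj: "P (e(i:=0)) \<or> (\<exists>\<alpha>\<in>set L. P (e(i:=rt \<alpha> e)) \<or> P (e(i:=rt \<alpha> e + 1)) \<or> P (e(i:=rt \<alpha> e - 1))
             \<or> (\<exists>\<beta>\<in>set L. P (e(i:=(rt \<alpha> e + rt \<beta> e) / 2))))"
      using FR[where Q="\<lambda>x. P (e(i:=x))" and a=co and b="\<lambda>\<alpha>. \<alpha> (e(i:=0))", OF hQ Px]
      unfolding rt_def .
    have "\<exists>\<tau>\<in>set tests. P (e(i := \<tau> e))"
      using disj
    proof (elim disjE bexE)
      assume "P (e(i:=0))" then show ?thesis
        by (intro bexI[of _ "\<lambda>e. 0"]) (auto simp: tests_def)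
    next
      fix \<alpha> assume "\<alpha> \<in> set L" "P (e(i:=rt \<alpha> e))" then show ?thesis
        by (intro bexI[of _ "rt \<alpha>"]) (auto simp: tests_def)
    next
      fix \<alpha> assume "\<alpha> \<in> set L" "P (e(i:=rt \<alpha> e + 1))" then show ?thesis
        by (intro bexI[of _ "\<lambda>e. rt \<alpha> e + 1"]) (auto simp: tests_def)
    next
      fix \<alpha> assume "\<alpha> \<in> set L" "P (e(i:=rt \<alpha> e - 1))" then show ?thesis
        by (intro bexI[of _ "\<lambda>e. rt \<alpha> e - 1"]) (auto simp: tests_def)
    next
      fix \<alpha> \<beta> assume "\<alpha> \<in> set L" "\<beta> \<in> set L" "P (e(i:=(rt \<alpha> e + rt \<beta> e) / 2))" then show ?thesis
        by (intro bexI[of _ "\<lambda>e. (rt \<alpha> e + rt \<beta> e) / 2"]) (auto simp: tests_def)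
    qed
    then obtain \<tau> where \<tau>: "\<tau> \<in> set tests" "P (e(i := \<tau> e))" by blast
    have "\<forall>\<alpha>\<in>set L. sgn (\<alpha> (e(i := \<tau> e))) = sgn (\<alpha> (e'(i := \<tau> e')))"
    proof
      fix \<alpha> assume "\<alpha> \<in> set L"
      then have "(\<lambda>e. \<alpha> (e(i:=\<tau> e))) \<in> set L'" unfolding L'_def using \<tau>(1) by auto
      from bspec[OF H this] show "sgn (\<alpha> (e(i := \<tau> e))) = sgn (\<alpha> (e'(i := \<tau> e')))" by simp
    qed
    then have "P (e'(i := \<tau> e'))" using r \<tau>(2) unfolding resp_def by blast
    then show "\<exists>x. P (e'(i:=x))" by blast
  qed
  ultimately show ?thesis by blast
qed




lemma Qn_simps[simp]: "carrier (Qn n) = UNIV" "add (Qn n) = (+)" "lt (Qn n) = (<)"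
  "zer (Qn n) = 0" "pred (Qn n) = of_nat ` {0..n}"
  by (simp_all add: Qn_def)

lemma eval_affine: "affine (\<lambda>e. eval_tm (Qn n) e t)"
  by (induction t) (auto intro: affine.intros)

lemma resp_cong: "resp L P \<Longrightarrow> (\<And>e. Q e = P e) \<Longrightarrow> resp L Q"
  unfolding resp_def by metis

lemma resp_conj: "resp L1 P \<Longrightarrow> resp L2 Q \<Longrightarrow> resp (L1 @ L2) (\<lambda>e. P e \<and> Q e)"
  unfolding resp_def set_append ball_Un by blast

lemma resp_disj: "resp L1 P \<Longrightarrow> resp L2 Q \<Longrightarrow> resp (L1 @ L2) (\<lambda>e. P e \<or> Q e)"
  unfolding resp_def set_append ball_Un by blast

lemma sat_resp: "\<exists>L. (\<forall>\<alpha>\<in>set L. affine \<alpha>) \<and> resp L (\<lambda>e. sat (Qn n) e \<phi>)"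
proof (induction \<phi>)
  case (Eq s t)
  show ?case
  proof (intro exI conjI)
    show "\<forall>\<alpha>\<in>set [\<lambda>e. eval_tm (Qn n) e s - eval_tm (Qn n) e t]. affine \<alpha>"
      by (auto intro: affine_diff eval_affine)
    show "resp [\<lambda>e. eval_tm (Qn n) e s - eval_tm (Qn n) e t] (\<lambda>e. sat (Qn n) e (Eq s t))"
      by (rule respI) (auto simp: sgn_eq_0_iff)
  qed
next
  case (Less s t)
  show ?case
  proof (intro exI conjI)
    show "\<forall>\<alpha>\<in>set [\<lambda>e. eval_tm (Qn n) e s - eval_tm (Qn n) e t]. affine \<alpha>"
      by (auto intro: affine_diff eval_affine)
    show "resp [\<lambda>e. eval_tm (Qn n) e s - eval_tm (Qn n) e t] (\<lambda>e. sat (Qn n) e (Less s t))"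
    proof (rule respI)
      fix e e' :: "nat \<Rightarrow> rat"
      assume "\<forall>\<alpha>\<in>set [\<lambda>e. eval_tm (Qn n) e s - eval_tm (Qn n) e t]. sgn (\<alpha> e) = sgn (\<alpha> e')"
        and "sat (Qn n) e (Less s t)"
      then show "sat (Qn n) e' (Less s t)"
        by (auto simp: sgn_if split: if_splits)
    qed
  qed
next
  case (Pr t)
  show ?case
  proof (intro exI conjI)
    show "\<forall>\<alpha>\<in>set (map (\<lambda>k e. eval_tm (Qn n) e t - of_nat k) [0..<Suc n]). affine \<alpha>"
      by (auto intro!: affine_diff eval_affine affine.intros)
    show "resp (map (\<lambda>k e. eval_tm (Qn n) e t - of_nat k) [0..<Suc n]) (\<lambda>e. sat (Qn n) e (Pr t))"
    proof (rule respI)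
      fix e e' :: "nat \<Rightarrow> rat"
      assume H: "\<forall>\<alpha>\<in>set (map (\<lambda>k e. eval_tm (Qn n) e t - of_nat k) [0..<Suc n]). sgn (\<alpha> e) = sgn (\<alpha> e')"
        and "sat (Qn n) e (Pr t)"
      then obtain k where k: "k \<le> n" "eval_tm (Qn n) e t = of_nat k" by auto
      have "sgn (eval_tm (Qn n) e t - of_nat k) = sgn (eval_tm (Qn n) e' t - of_nat k)"
        using H k(1) by auto
      then have "eval_tm (Qn n) e' t = of_nat k" using k(2) by (simp add: sgn_eq_0_iff)
      then show "sat (Qn n) e' (Pr t)" using k(1) by auto
    qed
  qed
next
  case (Neg \<phi>)
  then obtain L where "\<forall>\<alpha>\<in>set L. affine \<alpha>" "resp L (\<lambda>e. sat (Qn n) e \<phi>)" by blast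
  then show ?case by (intro exI[of _ L]) (auto dest: resp_neg)
next
  case (Conj \<phi> \<psi>)
  then obtain L1 L2 where "\<forall>\<alpha>\<in>set L1. affine \<alpha>" "resp L1 (\<lambda>e. sat (Qn n) e \<phi>)"
    "\<forall>\<alpha>\<in>set L2. affine \<alpha>" "resp L2 (\<lambda>e. sat (Qn n) e \<psi>)" by blast
  moreover have "resp (L1 @ L2) (\<lambda>e. sat (Qn n) e \<phi> \<and> sat (Qn n) e \<psi>)"
    "resp (L1 @ L2) (\<lambda>e. sat (Qn n) e \<phi> \<or> sat (Qn n) e \<psi>)"
    using calculation by (auto intro: resp_conj resp_disj)
  ultimately show ?case by (intro exI[of _ "L1 @ L2"]) auto
next
  case (Disj \<phi> \<psi>)
  then obtain L1 L2 where "\<forall>\<alpha>\<in>set L1. affine \<alpha>" "resp L1 (\<lambda>e. sat (Qn n) e \<phi>)"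
    "\<forall>\<alpha>\<in>set L2. affine \<alpha>" "resp L2 (\<lambda>e. sat (Qn n) e \<psi>)" by blast
  moreover have "resp (L1 @ L2) (\<lambda>e. sat (Qn n) e \<phi> \<and> sat (Qn n) e \<psi>)"
    "resp (L1 @ L2) (\<lambda>e. sat (Qn n) e \<phi> \<or> sat (Qn n) e \<psi>)"
    using calculation by (auto intro: resp_conj resp_disj)
  ultimately show ?case by (intro exI[of _ "L1 @ L2"]) auto
next
  case (Ex i \<phi>)
  then obtain L where "\<forall>\<alpha>\<in>set L. affine \<alpha>" "resp L (\<lambda>e. sat (Qn n) e \<phi>)" by blast
  from ex_step[OF this, of i] obtain L' where "\<forall>\<alpha>\<in>set L'. affine \<alpha>"
    "resp L' (\<lambda>e. \<exists>x. sat (Qn n) (e(i:=x)) \<phi>)" by blast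
  then show ?case by (intro exI[of _ L'] conjI) simp_all
next
  case (All i \<phi>)
  then obtain L where "\<forall>\<alpha>\<in>set L. affine \<alpha>" "resp L (\<lambda>e. sat (Qn n) e \<phi>)" by blast
  from ex_step[OF this(1) resp_neg[OF this(2)], of i] obtain L' where "\<forall>\<alpha>\<in>set L'. affine \<alpha>"
    "resp L' (\<lambda>e. \<exists>x. \<not> sat (Qn n) (e(i:=x)) \<phi>)" by blast
  then have "resp L' (\<lambda>e. \<not> (\<exists>x. \<not> sat (Qn n) (e(i:=x)) \<phi>))" "\<forall>\<alpha>\<in>set L'. affine \<alpha>"
    by (auto dest: resp_neg)
  then show ?case by (intro exI[of _ L'] conjI) simp_all
qed




lemma DC_abs:
  fixes a b :: "'b \<Rightarrow> rat"
  assumes hQ: "\<forall>x y. (\<forall>\<alpha>\<in>set L. sgn (a \<alpha> * x + b \<alpha>) = sgn (a \<alpha> * y + b \<alpha>)) \<longrightarrow> Q x \<longrightarrow> Q y"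
    and x0: "\<forall>y<x0. Q y" and x1: "\<not> (\<forall>y<x1. Q y)"
  shows "\<exists>m. (\<forall>y<m. Q y) \<and> (\<forall>x. (\<forall>y<x. Q y) \<longrightarrow> x \<le> m)"
proof (rule ccontr)
  assume nomax: "\<not> ?thesis"
  define R where "R = {- b \<alpha> / a \<alpha> |\<alpha>. \<alpha> \<in> set L \<and> a \<alpha> \<noteq> 0}"
  have finR: "finite R" unfolding R_def by simp
  have SS: "Q y" if "\<forall>r\<in>R. sgn (x - r) = sgn (y - r)" "Q x" for x y
    using same_side'[OF hQ _ that(2)] that(1) unfolding R_def by blast
  define M where "M = {r\<in>R. \<forall>y<r. Q y} \<union> {x0}"
  have finM: "finite M" using finR unfolding M_def by simp
  define m where "m = Max M"
  have "M \<noteq> {}" unfolding M_def by simp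
  then have "m \<in> M" unfolding m_def using finM by (intro Max_in)
  then have Sm: "\<forall>y<m. Q y" using x0 unfolding M_def by auto
  obtain s1 where s1: "\<forall>y<s1. Q y" "m < s1" using nomax Sm by (auto simp: not_le)
  have claim: "\<exists>r\<in>R. m < r \<and> r \<le> y" if "\<not> Q y" "s1 \<le> y" for y
  proof (rule ccontr)
    assume nr: "\<not> (\<exists>r\<in>R. m < r \<and> r \<le> y)"
    define w where "w = (m + s1) / 2"
    have w: "m < w" "w < s1" using s1(2) unfolding w_def by auto
    have "Q w" using s1(1) w by blast
    moreover have "\<forall>r\<in>R. sgn (w - r) = sgn (y - r)"
    proof
      fix r assume "r \<in> R"
      then have "r \<le> m \<or> y < r" using nr by auto
      then show "sgn (w - r) = sgn (y - r)" using w that(2) by (auto simp: sgn_if)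
    qed
    ultimately have "Q y" using SS by blast
    then show False using that(1) by blast
  qed
  obtain y1 where y1: "y1 < x1" "\<not> Q y1" using x1 by blast
  have "s1 \<le> y1" using y1 s1(1) by (meson not_le)
  define Rm where "Rm = {r\<in>R. m < r \<and> r \<le> y1}"
  have finRm: "finite Rm" "Rm \<noteq> {}" using finR claim[OF y1(2) \<open>s1 \<le> y1\<close>] unfolding Rm_def by auto
  define r0 where "r0 = Min Rm"
  have r0: "r0 \<in> Rm" unfolding r0_def using finRm by simp
  have "\<not> (\<forall>y<r0. Q y)"
  proof
    assume "\<forall>y<r0. Q y"
    then have "r0 \<in> M" using r0 unfolding M_def Rm_def by auto
    then have "r0 \<le> m" unfolding m_def using finM by simp
    then show False using r0 unfolding Rm_def by auto
  qed
  then obtain y' where y': "y' < r0" "\<not> Q y'" by blast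
  have "s1 \<le> y'" using y' s1(1) by (meson not_le)
  obtain r where r: "r \<in> R" "m < r" "r \<le> y'" using claim[OF y'(2) \<open>s1 \<le> y'\<close>] by blast
  have "r0 \<le> y1" using r0 unfolding Rm_def by auto
  then have "r \<in> Rm" using r y' unfolding Rm_def by auto
  then have "r0 \<le> r" unfolding r0_def using finRm by simp
  then show False using r y' by simp
qed

lemma DC_Qn:
  assumes x0: "\<forall>y<x0. sat (Qn n) (e(v:=y)) \<phi>" and x1: "\<not> (\<forall>y<x1. sat (Qn n) (e(v:=y)) \<phi>)"
  shows "\<exists>m. (\<forall>y<m. sat (Qn n) (e(v:=y)) \<phi>) \<and> (\<forall>x. (\<forall>y<x. sat (Qn n) (e(v:=y)) \<phi>) \<longrightarrow> x \<le> m)"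
proof -
  obtain L where aff: "\<forall>\<alpha>\<in>set L. affine \<alpha>" and r: "resp L (\<lambda>e. sat (Qn n) e \<phi>)"
    using sat_resp by blast
  define co where "co \<alpha> = (SOME a. \<forall>e x. \<alpha> (e(v:=x)) = \<alpha> (e(v:=0)) + a * x)" for \<alpha> :: "(nat \<Rightarrow> rat) \<Rightarrow> rat"
  have co: "\<alpha> (e(v:=x)) = \<alpha> (e(v:=0)) + co \<alpha> * x" if "\<alpha> \<in> set L" for \<alpha> e x
  proof -
    have "\<exists>a. \<forall>e x. \<alpha> (e(v:=x)) = \<alpha> (e(v:=0)) + a * x" using affine_split aff that by blast
    then have "\<forall>e x. \<alpha> (e(v:=x)) = \<alpha> (e(v:=0)) + co \<alpha> * x" unfolding co_def by (rule someI_ex)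
    then show ?thesis by blast
  qed
  have hQ: "\<forall>x y. (\<forall>\<alpha>\<in>set L. sgn (co \<alpha> * x + \<alpha> (e(v:=0))) = sgn (co \<alpha> * y + \<alpha> (e(v:=0)))) \<longrightarrow> sat (Qn n) (e(v:=x)) \<phi> \<longrightarrow> sat (Qn n) (e(v:=y)) \<phi>"
  proof (intro allI impI)
    fix x y
    assume s: "\<forall>\<alpha>\<in>set L. sgn (co \<alpha> * x + \<alpha> (e(v:=0))) = sgn (co \<alpha> * y + \<alpha> (e(v:=0)))" and "sat (Qn n) (e(v:=x)) \<phi>"
    have "\<forall>\<alpha>\<in>set L. sgn (\<alpha> (e(v:=x))) = sgn (\<alpha> (e(v:=y)))"
      using s co by (simp add: add.commute)
    then show "sat (Qn n) (e(v:=y)) \<phi>" using r \<open>sat (Qn n) (e(v:=x)) \<phi>\<close> unfolding resp_def by blast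
  qed
  show ?thesis using DC_abs[where Q="\<lambda>y. sat (Qn n) (e(v:=y)) \<phi>", OF hQ x0 x1] .
qed




locale npu = fixes F :: "nat set set" assumes npu: "nonprincipal_ultrafilter F"
begin

lemma F_UNIV: "UNIV \<in> F" using npu unfolding nonprincipal_ultrafilter_def by simp
lemma F_empty: "{} \<notin> F" using npu unfolding nonprincipal_ultrafilter_def by simp
lemma F_Int: "A \<in> F \<Longrightarrow> B \<in> F \<Longrightarrow> A \<inter> B \<in> F"
  using npu unfolding nonprincipal_ultrafilter_def by simp
lemma F_mono: "A \<in> F \<Longrightarrow> A \<subseteq> B \<Longrightarrow> B \<in> F"
  using npu unfolding nonprincipal_ultrafilter_def by blast
lemma F_compl: "A \<in> F \<or> - A \<in> F"
  using npu unfolding nonprincipal_ultrafilter_def by simp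
lemma F_inf: "A \<in> F \<Longrightarrow> infinite A"
  using npu unfolding nonprincipal_ultrafilter_def by simp

lemma F_not: "A \<notin> F \<longleftrightarrow> - A \<in> F"
proof
  assume "A \<notin> F" then show "- A \<in> F" using F_compl by blast
next
  assume "- A \<in> F"
  show "A \<notin> F"
  proof
    assume "A \<in> F"
    then have "A \<inter> - A \<in> F" using F_Int \<open>- A \<in> F\<close> by blast
    then show False using F_empty by simp
  qed
qed

lemma F_Int_iff: "A \<inter> B \<in> F \<longleftrightarrow> A \<in> F \<and> B \<in> F"
  using F_Int F_mono by blast

lemma F_Un_iff: "A \<union> B \<in> F \<longleftrightarrow> A \<in> F \<or> B \<in> F"
proof
  assume AB: "A \<union> B \<in> F"
  show "A \<in> F \<or> B \<in> F"
  proof (rule ccontr)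
    assume "\<not> (A \<in> F \<or> B \<in> F)"
    then have "- A \<inter> - B \<in> F" using F_not F_Int by blast
    then have "(A \<union> B) \<inter> (- A \<inter> - B) \<in> F" using AB F_Int by blast
    moreover have "(A \<union> B) \<inter> (- A \<inter> - B) = {}" by blast
    ultimately show False using F_empty by simp
  qed
qed (use F_mono in blast)

lemma F_nonempty: "A \<in> F \<Longrightarrow> \<exists>n. n \<in> A"
  using F_empty by (metis all_not_in_conv)

lemma F_cofin: "finite A \<Longrightarrow> - A \<in> F"
  using F_compl F_inf by blast

abbreviation "G \<equiv> ultraproduct F Qn"

definition cls :: "(nat \<Rightarrow> rat) \<Rightarrow> (nat \<Rightarrow> rat) set" where
  "cls f = uprel F Qn `` {f}"

lemma uprel_eq: "uprel F Qn = {(f, g). {n. f n = g n} \<in> F}"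
  unfolding uprel_def by auto

lemma equiv_up: "equiv UNIV (uprel F Qn)"
proof (rule equivI)
  show "uprel F Qn \<subseteq> UNIV \<times> UNIV" by simp
  show "refl (uprel F Qn)" unfolding uprel_eq refl_on_def using F_UNIV by auto
  show "sym (uprel F Qn)" unfolding uprel_eq sym_def by (auto simp: eq_commute)
  show "trans (uprel F Qn)" unfolding uprel_eq trans_def
  proof (clarsimp)
    fix f g h :: "nat \<Rightarrow> rat"
    assume "{n. f n = g n} \<in> F" "{n. g n = h n} \<in> F"
    then have "{n. f n = g n} \<inter> {n. g n = h n} \<in> F" by (rule F_Int)
    then show "{n. f n = h n} \<in> F" by (rule F_mono) auto
  qed
qed

lemma carrier_G: "carrier G = range cls"
  unfolding ultraproduct_def cls_def quotient_def by auto

lemma cls_in: "cls f \<in> carrier G"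
  unfolding carrier_G by simp

lemma cls_eq: "cls f = cls g \<longleftrightarrow> {n. f n = g n} \<in> F"
  unfolding cls_def using eq_equiv_class_iff[OF equiv_up, of f g] by (simp add: uprel_eq)

lemma mem_cls: "h \<in> cls f \<longleftrightarrow> {n. f n = h n} \<in> F"
  unfolding cls_def uprel_eq by simp

lemma self_cls: "f \<in> cls f"
  unfolding mem_cls using F_UNIV by simp

lemma lt_cls: "lt G (cls f) (cls g) \<longleftrightarrow> {n. f n < g n} \<in> F"
proof
  assume "lt G (cls f) (cls g)"
  then obtain f' g' where "f' \<in> cls f" "g' \<in> cls g" "{n. f' n < g' n} \<in> F"
    unfolding ultraproduct_def by auto
  then have "{n. f n = f' n} \<inter> {n. g n = g' n} \<inter> {n. f' n < g' n} \<in> F"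
    unfolding mem_cls by (intro F_Int)
  then show "{n. f n < g n} \<in> F" by (rule F_mono) auto
next
  assume "{n. f n < g n} \<in> F"
  then show "lt G (cls f) (cls g)" unfolding ultraproduct_def using self_cls by auto
qed

lemma add_cls: "add G (cls f) (cls g) = cls (\<lambda>n. f n + g n)"
proof (rule set_eqI)
  fix h
  have "h \<in> add G (cls f) (cls g) \<longleftrightarrow> (\<exists>f'\<in>cls f. \<exists>g'\<in>cls g. {n. h n = f' n + g' n} \<in> F)"
    unfolding ultraproduct_def uprel_eq by simp
  also have "\<dots> \<longleftrightarrow> {n. f n + g n = h n} \<in> F"
  proof
    assume "\<exists>f'\<in>cls f. \<exists>g'\<in>cls g. {n. h n = f' n + g' n} \<in> F"
    then obtain f' g' where "f' \<in> cls f" "g' \<in> cls g" "{n. h n = f' n + g' n} \<in> F"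
      by blast
    then have "{n. f n = f' n} \<in> F" "{n. g n = g' n} \<in> F" "{n. h n = f' n + g' n} \<in> F"
      unfolding mem_cls by blast+
    then have "{n. f n = f' n} \<inter> {n. g n = g' n} \<inter> {n. h n = f' n + g' n} \<in> F" by (intro F_Int)
    then show "{n. f n + g n = h n} \<in> F" by (rule F_mono) auto
  next
    assume "{n. f n + g n = h n} \<in> F"
    then show "\<exists>f'\<in>cls f. \<exists>g'\<in>cls g. {n. h n = f' n + g' n} \<in> F"
      using self_cls by (auto simp: eq_commute)
  qed
  also have "\<dots> \<longleftrightarrow> h \<in> cls (\<lambda>n. f n + g n)" unfolding mem_cls by simp
  finally show "h \<in> add G (cls f) (cls g) \<longleftrightarrow> h \<in> cls (\<lambda>n. f n + g n)" .
qed

lemma zer_G: "zer G = cls (\<lambda>n. 0)"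
  unfolding ultraproduct_def cls_def by simp

lemma pred_cls: "cls f \<in> pred G \<longleftrightarrow> {n. f n \<in> of_nat ` {0..n}} \<in> F"
proof
  assume "cls f \<in> pred G"
  then obtain f' where "f' \<in> cls f" "{n. f' n \<in> of_nat ` {0..n}} \<in> F"
    unfolding ultraproduct_def by auto
  then have "{n. f n = f' n} \<inter> {n. f' n \<in> of_nat ` {0..n}} \<in> F"
    unfolding mem_cls by (intro F_Int)
  then show "{n. f n \<in> of_nat ` {0..n}} \<in> F" by (rule F_mono) auto
next
  assume "{n. f n \<in> of_nat ` {0..n}} \<in> F"
  then show "cls f \<in> pred G" using self_cls cls_in
    unfolding ultraproduct_def carrier_G by auto
qed

lemma eval_cls: "eval_tm G (\<lambda>i. cls (e i)) t = cls (\<lambda>n. eval_tm (Qn n) (\<lambda>i. e i n) t)"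
  by (induction t) (simp_all add: zer_G add_cls)

lemma upd_cls: "(\<lambda>j. cls (e j))(i := cls g) = (\<lambda>j. cls ((e(i:=g)) j))"
  by (auto simp: fun_eq_iff)

lemma upd_n: "(\<lambda>j. (e(i:=g)) j n) = (\<lambda>j. e j n)(i := g n)"
  by auto

lemma upd_n': "(\<lambda>j. (if j = i then g else e j) n) = (\<lambda>j. e j n)(i := g n)"
  by auto

lemma los: "sat G (\<lambda>i. cls (e i)) \<phi> \<longleftrightarrow> {n. sat (Qn n) (\<lambda>i. e i n) \<phi>} \<in> F"
proof (induction \<phi> arbitrary: e)
  case (Eq s t) then show ?case by (simp add: eval_cls cls_eq)
next
  case (Less s t) then show ?case by (simp add: eval_cls lt_cls)
next
  case (Pr t) then show ?case by (simp add: eval_cls pred_cls)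
next
  case (Neg \<phi>) then show ?case by (simp add: F_not Collect_neg_eq)
next
  case (Conj \<phi> \<psi>) then show ?case by (simp add: F_Int_iff[symmetric] Collect_conj_eq)
next
  case (Disj \<phi> \<psi>) then show ?case by (simp add: F_Un_iff[symmetric] Collect_disj_eq)
next
  case (Ex i \<phi>)
  have "sat G (\<lambda>i. cls (e i)) (Ex i \<phi>) \<longleftrightarrow> (\<exists>g. {n. sat (Qn n) ((\<lambda>j. e j n)(i := g n)) \<phi>} \<in> F)"
    by (simp add: carrier_G upd_cls Ex.IH upd_n upd_n')
  also have "\<dots> \<longleftrightarrow> {n. \<exists>x. sat (Qn n) ((\<lambda>j. e j n)(i := x)) \<phi>} \<in> F"
  proof
    assume "\<exists>g. {n. sat (Qn n) ((\<lambda>j. e j n)(i := g n)) \<phi>} \<in> F"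
    then obtain g where "{n. sat (Qn n) ((\<lambda>j. e j n)(i := g n)) \<phi>} \<in> F" by blast
    then show "{n. \<exists>x. sat (Qn n) ((\<lambda>j. e j n)(i := x)) \<phi>} \<in> F" by (rule F_mono) auto
  next
    assume A: "{n. \<exists>x. sat (Qn n) ((\<lambda>j. e j n)(i := x)) \<phi>} \<in> F"
    define g where "g n = (SOME x. sat (Qn n) ((\<lambda>j. e j n)(i := x)) \<phi>)" for n
    have "{n. sat (Qn n) ((\<lambda>j. e j n)(i := g n)) \<phi>} \<in> F"
      using A by (rule F_mono) (auto simp: g_def intro: someI)
    then show "\<exists>g. {n. sat (Qn n) ((\<lambda>j. e j n)(i := g n)) \<phi>} \<in> F" by blast
  qed
  finally show ?case by simp
next
  case (All i \<phi>)
  have "sat G (\<lambda>i. cls (e i)) (All i \<phi>) \<longleftrightarrow> (\<forall>g. {n. sat (Qn n) ((\<lambda>j. e j n)(i := g n)) \<phi>} \<in> F)"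
    by (simp add: carrier_G upd_cls All.IH upd_n upd_n')
  also have "\<dots> \<longleftrightarrow> {n. \<forall>x. sat (Qn n) ((\<lambda>j. e j n)(i := x)) \<phi>} \<in> F"
  proof
    assume H: "\<forall>g. {n. sat (Qn n) ((\<lambda>j. e j n)(i := g n)) \<phi>} \<in> F"
    show "{n. \<forall>x. sat (Qn n) ((\<lambda>j. e j n)(i := x)) \<phi>} \<in> F"
    proof (rule ccontr)
      assume "{n. \<forall>x. sat (Qn n) ((\<lambda>j. e j n)(i := x)) \<phi>} \<notin> F"
      then have B: "{n. \<exists>x. \<not> sat (Qn n) ((\<lambda>j. e j n)(i := x)) \<phi>} \<in> F"
        using F_not by (simp add: Collect_neg_eq[symmetric])
      define g where "g n = (SOME x. \<not> sat (Qn n) ((\<lambda>j. e j n)(i := x)) \<phi>)" for n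
      have "{n. \<exists>x. \<not> sat (Qn n) ((\<lambda>j. e j n)(i := x)) \<phi>} \<subseteq> {n. \<not> sat (Qn n) ((\<lambda>j. e j n)(i := g n)) \<phi>}"
      proof
        fix n assume "n \<in> {n. \<exists>x. \<not> sat (Qn n) ((\<lambda>j. e j n)(i := x)) \<phi>}"
        then have "\<exists>x. \<not> sat (Qn n) ((\<lambda>j. e j n)(i := x)) \<phi>" by simp
        from someI_ex[OF this] show "n \<in> {n. \<not> sat (Qn n) ((\<lambda>j. e j n)(i := g n)) \<phi>}"
          unfolding g_def by simp
      qed
      then have "{n. \<not> sat (Qn n) ((\<lambda>j. e j n)(i := g n)) \<phi>} \<in> F"
        using B by (rule F_mono[rotated])
      then have "{n. \<not> sat (Qn n) ((\<lambda>j. e j n)(i := g n)) \<phi>} \<inter> {n. sat (Qn n) ((\<lambda>j. e j n)(i := g n)) \<phi>} \<in> F"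
        using H F_Int by blast
      moreover have "{n. \<not> sat (Qn n) ((\<lambda>j. e j n)(i := g n)) \<phi>} \<inter> {n. sat (Qn n) ((\<lambda>j. e j n)(i := g n)) \<phi>} = {}"
        by blast
      ultimately show False using F_empty by simp
    qed
  next
    assume "{n. \<forall>x. sat (Qn n) ((\<lambda>j. e j n)(i := x)) \<phi>} \<in> F"
    then show "\<forall>g. {n. sat (Qn n) ((\<lambda>j. e j n)(i := g n)) \<phi>} \<in> F"
      by (auto elim!: F_mono)
  qed
  finally show ?case by simp
qed

end



context npu begin

lemma rep: "X \<in> carrier G \<Longrightarrow> \<exists>f. X = cls f"
  unfolding carrier_G by auto

lemma G_DCI: "satisfies_DCI G"
  unfolding satisfies_DCI_def Let_def
proof (intro allI impI)
  fix \<phi> :: fm and v :: nat and E :: "nat \<Rightarrow> (nat \<Rightarrow> rat) set"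
  assume Ecar: "\<forall>i. E i \<in> carrier G"
  define e where "e i = (SOME f. E i = cls f)" for i
  have Ee: "E = (\<lambda>i. cls (e i))"
  proof
    fix i show "E i = cls (e i)" unfolding e_def using rep[OF Ecar[rule_format, of i]] by (rule someI_ex)
  qed
  define P where "P n q = sat (Qn n) ((\<lambda>j. e j n)(v := q)) \<phi>" for n q
  have Phi: "sat G (E(v := cls g)) \<phi> \<longleftrightarrow> {n. P n (g n)} \<in> F" for g
    unfolding Ee upd_cls los P_def upd_n ..
  have below: "(\<forall>X\<in>carrier G. lt G X (cls g) \<longrightarrow> sat G (E(v := X)) \<phi>) \<longleftrightarrow> {n. \<forall>y<g n. P n y} \<in> F" for g
  proof
    assume H: "\<forall>X\<in>carrier G. lt G X (cls g) \<longrightarrow> sat G (E(v := X)) \<phi>"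
    show "{n. \<forall>y<g n. P n y} \<in> F"
    proof (rule ccontr)
      assume "{n. \<forall>y<g n. P n y} \<notin> F"
      then have B: "{n. \<exists>y<g n. \<not> P n y} \<in> F" using F_not by (simp add: Collect_neg_eq[symmetric])
      define h where "h n = (SOME y. y < g n \<and> \<not> P n y)" for n
      have sub: "{n. \<exists>y<g n. \<not> P n y} \<subseteq> {n. h n < g n \<and> \<not> P n (h n)}"
      proof
        fix n assume "n \<in> {n. \<exists>y<g n. \<not> P n y}"
        then have "\<exists>y. y < g n \<and> \<not> P n y" by simp
        from someI_ex[OF this] show "n \<in> {n. h n < g n \<and> \<not> P n (h n)}" unfolding h_def by simp
      qed
      have "{n. h n < g n} \<in> F" using B by (rule F_mono) (use sub in auto)
      then have "lt G (cls h) (cls g)" by (simp add: lt_cls)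
      then have "sat G (E(v := cls h)) \<phi>" using H cls_in by blast
      then have "{n. P n (h n)} \<in> F" using Phi by blast
      moreover have "{n. \<not> P n (h n)} \<in> F" using B by (rule F_mono) (use sub in auto)
      ultimately have "{n. P n (h n)} \<inter> {n. \<not> P n (h n)} \<in> F" by (rule F_Int)
      moreover have "{n. P n (h n)} \<inter> {n. \<not> P n (h n)} = {}" by blast
      ultimately show False using F_empty by simp
    qed
  next
    assume A: "{n. \<forall>y<g n. P n y} \<in> F"
    show "\<forall>X\<in>carrier G. lt G X (cls g) \<longrightarrow> sat G (E(v := X)) \<phi>"
    proof (intro ballI impI)
      fix X assume "X \<in> carrier G" "lt G X (cls g)"
      then obtain h where X: "X = cls h" using rep by blast
      have "{n. h n < g n} \<in> F" using \<open>lt G X (cls g)\<close> X lt_cls by simp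
      then have "{n. h n < g n} \<inter> {n. \<forall>y<g n. P n y} \<in> F" using A by (rule F_Int)
      then have "{n. P n (h n)} \<in> F" by (rule F_mono) auto
      then show "sat G (E(v := X)) \<phi>" using X Phi by simp
    qed
  qed
  assume "(\<exists>s\<in>carrier G. \<forall>x\<in>carrier G. lt G x s \<longrightarrow> sat G (E(v := x)) \<phi>) \<and>
       (\<forall>x\<in>carrier G. (\<forall>s\<in>carrier G. lt G s x \<longrightarrow> sat G (E(v := s)) \<phi>) \<longrightarrow>
           (\<exists>u\<in>carrier G. lt G x u \<and> (\<forall>s\<in>carrier G. lt G s u \<longrightarrow> sat G (E(v := s)) \<phi>)))"
  then have H1: "\<exists>s\<in>carrier G. \<forall>x\<in>carrier G. lt G x s \<longrightarrow> sat G (E(v := x)) \<phi>"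
    and H2: "\<forall>x\<in>carrier G. (\<forall>s\<in>carrier G. lt G s x \<longrightarrow> sat G (E(v := s)) \<phi>) \<longrightarrow>
           (\<exists>u\<in>carrier G. lt G x u \<and> (\<forall>s\<in>carrier G. lt G s u \<longrightarrow> sat G (E(v := s)) \<phi>))" by blast+
  show "\<forall>x\<in>carrier G. sat G (E(v := x)) \<phi>"
  proof (rule ccontr)
    assume "\<not> (\<forall>x\<in>carrier G. sat G (E(v := x)) \<phi>)"
    then obtain f0 where "\<not> sat G (E(v := cls f0)) \<phi>" using rep by blast
    then have A0: "{n. \<not> P n (f0 n)} \<in> F" using Phi F_not by (simp add: Collect_neg_eq)
    obtain g1 where "\<forall>x\<in>carrier G. lt G x (cls g1) \<longrightarrow> sat G (E(v := x)) \<phi>"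
      using H1 rep by blast
    then have B1: "{n. \<forall>y<g1 n. P n y} \<in> F" using below by blast
    define AB where "AB = {n. \<not> P n (f0 n)} \<inter> {n. \<forall>y<g1 n. P n y}"
    have AB: "AB \<in> F" unfolding AB_def using A0 B1 by (rule F_Int)
    have exm: "\<exists>m. (\<forall>y<m. P n y) \<and> (\<forall>x. (\<forall>y<x. P n y) \<longrightarrow> x \<le> m)" if "n \<in> AB" for n
    proof -
      have x0: "\<forall>y<g1 n. P n y" using that unfolding AB_def by simp
      have x1: "\<not> (\<forall>y<f0 n + 1. P n y)" using that unfolding AB_def by force
      show ?thesis using DC_Qn[of "g1 n" n "\<lambda>j. e j n" v \<phi> "f0 n + 1"] x0 x1 unfolding P_def by blast
    qed
    define r where "r n = (SOME m. (\<forall>y<m. P n y) \<and> (\<forall>x. (\<forall>y<x. P n y) \<longrightarrow> x \<le> m))" for n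
    have r: "(\<forall>y<r n. P n y) \<and> (\<forall>x. (\<forall>y<x. P n y) \<longrightarrow> x \<le> r n)" if "n \<in> AB" for n
      unfolding r_def using someI_ex[OF exm[OF that]] .
    have "{n. \<forall>y<r n. P n y} \<in> F" using AB by (rule F_mono) (use r in blast)
    then have "\<forall>s\<in>carrier G. lt G s (cls r) \<longrightarrow> sat G (E(v := s)) \<phi>" using below by blast
    then obtain u where "u \<in> carrier G" "lt G (cls r) u" "\<forall>s\<in>carrier G. lt G s u \<longrightarrow> sat G (E(v := s)) \<phi>"
      using H2 cls_in by blast
    then obtain g2 where "lt G (cls r) (cls g2)" "\<forall>s\<in>carrier G. lt G s (cls g2) \<longrightarrow> sat G (E(v := s)) \<phi>"
      using rep by blast
    then have C: "{n. r n < g2 n} \<in> F" and D: "{n. \<forall>y<g2 n. P n y} \<in> F"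
      using lt_cls below by blast+
    have "AB \<inter> {n. r n < g2 n} \<inter> {n. \<forall>y<g2 n. P n y} \<in> F" using AB C D by (intro F_Int)
    then obtain n where n: "n \<in> AB" "r n < g2 n" "\<forall>y<g2 n. P n y" using F_nonempty by blast
    then have "g2 n \<le> r n" using r by blast
    then show False using n(2) by simp
  qed
qed

end



context npu begin

lemma lt_trans_G:
  assumes "x \<in> carrier G" "y \<in> carrier G" "z \<in> carrier G" "lt G x y" "lt G y z"
  shows "lt G x z"
proof -
  obtain a b c where abc: "x = cls a" "y = cls b" "z = cls c" using assms(1-3) rep by blast
  have "{n. a n < b n} \<inter> {n. b n < c n} \<in> F" using assms(4,5) abc lt_cls F_Int by simp
  then have "{n. a n < c n} \<in> F" by (rule F_mono) auto
  then show ?thesis using abc lt_cls by simp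
qed

lemma pred_sub: "pred G \<subseteq> carrier G"
  unfolding ultraproduct_def by auto

lemma pred_infinite: "infinite (pred G)"
proof -
  define c where "c k = cls (\<lambda>n. of_nat k)" for k :: nat
  have ck: "c k \<in> pred G" for k
  proof -
    have "- {..<k} \<in> F" by (rule F_cofin) simp
    then have "{n. (of_nat k :: rat) \<in> of_nat ` {0..n}} \<in> F" by (rule F_mono) auto
    then show ?thesis unfolding c_def pred_cls .
  qed
  moreover have "inj c"
  proof
    fix k k' assume "c k = c k'"
    then have "{n. (of_nat k :: rat) = of_nat k'} \<in> F" unfolding c_def cls_eq .
    then obtain n where "(of_nat k :: rat) = of_nat k'" using F_nonempty by blast
    then show "k = k'" by simp
  qed
  show ?thesis
  proof
    assume "finite (pred G)"
    moreover have "c ` UNIV \<subseteq> pred G" using ck by blast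
    ultimately have "finite (UNIV :: nat set)" using inj_on_finite[OF \<open>inj c\<close>] by blast
    then show False by simp
  qed
qed

lemma no_interval:
  assumes I: "open_interval G I" and sub: "I \<subseteq> pred G"
  shows "I = {}"
proof (rule ccontr)
  assume "I \<noteq> {}"
  then obtain x where xI: "x \<in> I" by blast
  then have xP: "x \<in> pred G" using sub by blast
  then obtain f where xf: "x = cls f" using pred_sub rep by blast
  have "\<exists>g. {n. g n < f n} \<in> F \<and> (\<forall>y\<in>carrier G. lt G (cls g) y \<and> lt G y x \<longrightarrow> y \<in> I)"
  proof -
    have lowf: "{n. f n - 1 < f n} \<in> F" using F_UNIV by simp
    from I show ?thesis unfolding open_interval_def
    proof (elim disjE bexE)
      fix a b assume ab: "a \<in> carrier G" "b \<in> carrier G" and Ieq: "I = {x \<in> carrier G. lt G a x \<and> lt G x b}"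
      obtain ga where ga: "a = cls ga" using ab rep by blast
      have "lt G a x" "lt G x b" using xI Ieq by auto
      then have "{n. ga n < f n} \<in> F" using ga xf lt_cls by simp
      moreover have "\<forall>y\<in>carrier G. lt G (cls ga) y \<and> lt G y x \<longrightarrow> y \<in> I"
      proof (intro ballI impI)
        fix y assume y: "y \<in> carrier G" "lt G (cls ga) y \<and> lt G y x"
        have "x \<in> carrier G" using xP pred_sub by blast
        then have "lt G y b" using lt_trans_G[OF y(1) _ ab(2)] y(2) \<open>lt G x b\<close> by blast
        then show "y \<in> I" using Ieq ga y by simp
      qed
      ultimately show ?thesis by blast
    next
      fix a assume ab: "a \<in> carrier G" and Ieq: "I = {x \<in> carrier G. lt G a x}"
      obtain ga where ga: "a = cls ga" using ab rep by blast
      have "lt G a x" using xI Ieq by auto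
      then have "{n. ga n < f n} \<in> F" using ga xf lt_cls by simp
      moreover have "\<forall>y\<in>carrier G. lt G (cls ga) y \<and> lt G y x \<longrightarrow> y \<in> I"
        using Ieq ga by simp
      ultimately show ?thesis by blast
    next
      fix b assume ab: "b \<in> carrier G" and Ieq: "I = {x \<in> carrier G. lt G x b}"
      have "lt G x b" using xI Ieq by auto
      have "\<forall>y\<in>carrier G. lt G (cls (\<lambda>n. f n - 1)) y \<and> lt G y x \<longrightarrow> y \<in> I"
      proof (intro ballI impI)
        fix y assume y: "y \<in> carrier G" "lt G (cls (\<lambda>n. f n - 1)) y \<and> lt G y x"
        have "x \<in> carrier G" using xP pred_sub by blast
        then have "lt G y b" using lt_trans_G[OF y(1) _ ab] y(2) \<open>lt G x b\<close> by blast
        then show "y \<in> I" using Ieq y by simp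
      qed
      then show ?thesis using lowf by (intro exI[of _ "\<lambda>n. f n - 1"]) simp
    next
      assume Ieq: "I = carrier G"
      then show ?thesis using lowf by (intro exI[of _ "\<lambda>n. f n - 1"]) simp
    qed
  qed
  then obtain g where g: "{n. g n < f n} \<in> F" and gI: "\<forall>y\<in>carrier G. lt G (cls g) y \<and> lt G y x \<longrightarrow> y \<in> I"
    by blast
  define zf where "zf n = max (f n - 1/2) ((g n + f n) / 2)" for n
  have "{n. g n < zf n} \<in> F" using g by (rule F_mono) (auto simp: zf_def less_max_iff_disj max_less_iff_conj)
  moreover have "{n. zf n < f n} \<in> F" using g by (rule F_mono) (auto simp: zf_def less_max_iff_disj max_less_iff_conj)
  ultimately have "cls zf \<in> I" using gI xf cls_in lt_cls by simp
  then have "cls zf \<in> pred G" using sub by blast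
  then have "{n. zf n \<in> of_nat ` {0..n}} \<in> F" using pred_cls by simp
  moreover have "{n. f n \<in> of_nat ` {0..n}} \<in> F" using xP xf pred_cls by simp
  ultimately have "{n. zf n \<in> of_nat ` {0..n}} \<inter> {n. f n \<in> of_nat ` {0..n}} \<inter> {n. g n < f n} \<in> F"
    using g by (intro F_Int)
  then obtain n where n: "zf n \<in> of_nat ` {0..n}" "f n \<in> of_nat ` {0..n}" "g n < f n"
    using F_nonempty by blast
  then obtain k k' :: nat where kk: "zf n = of_nat k'" "f n = of_nat k" by blast
  have "f n - 1/2 \<le> zf n" "zf n < f n" using n(3) by (auto simp: zf_def)
  then have "of_nat k - 1/2 \<le> (of_nat k' :: rat)" "k' < k" using kk by auto
  then have "k' + 1 \<le> k" by simp
  then have "(of_nat k' :: rat) + 1 \<le> of_nat k" by (metis of_nat_1 of_nat_add of_nat_le_iff)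
  then show False using \<open>of_nat k - 1/2 \<le> (of_nat k' :: rat)\<close> by linarith
qed

lemma G_not_omin: "\<not> o_minimal G"
proof
  assume om: "o_minimal G"
  have def: "definable_set G (pred G)"
    unfolding definable_set_def
  proof (intro exI conjI)
    show "\<forall>i. (\<lambda>_. zer G) i \<in> carrier G" using zer_G cls_in by simp
    have "\<And>x. sat G ((\<lambda>_. zer G)(0 := x)) (Pr (Var 0)) \<longleftrightarrow> x \<in> pred G" by simp
    then show "pred G = {x \<in> carrier G. sat G ((\<lambda>_. zer G)(0 := x)) (Pr (Var 0))}"
      using pred_sub by blast
  qed
  obtain S where S: "finite S" "\<forall>I\<in>S. open_interval G I \<or> (\<exists>a\<in>carrier G. I = {a})"
    "pred G = \<Union>S" using om def unfolding o_minimal_def by meson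
  have "\<forall>I\<in>S. finite I"
  proof
    fix I assume IS: "I \<in> S"
    then have sub: "I \<subseteq> pred G" using S(3) by blast
    from S(2) IS have "open_interval G I \<or> (\<exists>a\<in>carrier G. I = {a})" by blast
    then show "finite I"
    proof
      assume "open_interval G I"
      then have "I = {}" using sub by (rule no_interval)
      then show ?thesis by simp
    next
      assume "\<exists>a\<in>carrier G. I = {a}"
      then show ?thesis by auto
    qed
  qed
  then have "finite (pred G)" using S(1,3) by simp
  then show False using pred_infinite by simp
qed

end


theorem mainTheorem6:
  assumes "nonprincipal_ultrafilter F"
  shows "satisfies_DCI (ultraproduct F Qn) \<and> \<not> o_minimal (ultraproduct F Qn)"
proof -
  interpret npu F by (rule npu.intro) (rule assms)
  show ?thesis using G_DCI G_not_omin by simp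
qed

end
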